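(* Let $E\subseteq\mathcal F(\mathbb Z^s,\bar K)$ be a translation-invariant subspace of finite dimension. Then $E$ is a characteristic subspace (i.e., spanned by finitely many characters $\theta\in\mathrm{Char}(\mathbb Z^s,\bar K^\times)$) if and only if its period lattice $\Lambda(E)$ is a characteristic sublattice, i.e. has finite index in $\mathbb Z^s$ coprime to $p$.
   Context: $K=\mathrm{GF}(p^r)$, $\bar K$ an algebraic closure; $\mathcal F(\mathbb Z^s,\bar K)$ is the space of all functions $\mathbb Z^s\to\bar K$; translation-invariant means stable under all $\tau_v:f\mapsto f(\cdot+v)$. $\mathrm{Char}(\mathbb Z^s,\bar K^\times)$ is the set of homomorphisms $\mathbb Z^s\to\bar K^\times$. The period lattice of $E$ is $\Lambda(E)=\{v\in\mathbb Z^s:\tau_v f=f\ \forall f\in E\}$ (it has finite index since $E$ is finite dimensional). A sublattice is characteristic if it equals $\bigcap_{i=1}^m\ker(\theta_i)$ for some characters $\theta_1,\ldots,\theta_m$; a finite-index sublattice is characteristic iff its index is coprime to $p$. *)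

theory Defs
  imports "HOL-Algebra.Algebraic_Closure_Type" "HOL-Analysis.Finite_Cartesian_Product"
    "HOL-Library.Function_Algebras"
begin

definition fscale :: "'k::field \<Rightarrow> ('z \<Rightarrow> 'k) \<Rightarrow> ('z \<Rightarrow> 'k)" where
  "fscale c f = (\<lambda>x. c * f x)"

abbreviation fspan :: "('z \<Rightarrow> 'k::field) set \<Rightarrow> ('z \<Rightarrow> 'k) set" where
  "fspan \<equiv> Modules.module.span fscale"

abbreviation fsubspace :: "('z \<Rightarrow> 'k::field) set \<Rightarrow> bool" where
  "fsubspace \<equiv> Modules.module.subspace fscale"

definition fin_dim_subspace :: "('z \<Rightarrow> 'k::field) set \<Rightarrow> bool" where
  "fin_dim_subspace E \<longleftrightarrow> fsubspace E \<and> (\<exists>B. finite B \<and> fspan B = E)"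

definition transl :: "'z::plus \<Rightarrow> ('z \<Rightarrow> 'k) \<Rightarrow> ('z \<Rightarrow> 'k)" where
  "transl v f = (\<lambda>x. f (x + v))"

definition translation_invariant :: "('z::plus \<Rightarrow> 'k) set \<Rightarrow> bool" where
  "translation_invariant E \<longleftrightarrow> (\<forall>v f. f \<in> E \<longrightarrow> transl v f \<in> E)"

definition is_character :: "('z::monoid_add \<Rightarrow> 'k::field) \<Rightarrow> bool" where
  "is_character \<theta> \<longleftrightarrow> (\<forall>x. \<theta> x \<noteq> 0) \<and> (\<forall>x y. \<theta> (x + y) = \<theta> x * \<theta> y)"

definition characteristic_subspace :: "('z::monoid_add \<Rightarrow> 'k::field) set \<Rightarrow> bool" where
  "characteristic_subspace E \<longleftrightarrow>
     (\<exists>C. finite C \<and> (\<forall>\<theta>\<in>C. is_character \<theta>) \<and> fspan C = E)"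

definition period_lattice :: "('z::plus \<Rightarrow> 'k) set \<Rightarrow> 'z set" where
  "period_lattice E = {v. \<forall>f\<in>E. transl v f = f}"

definition characteristic_sublattice :: "('z::monoid_add) set \<Rightarrow> 'k::field itself \<Rightarrow> bool" where
  "characteristic_sublattice L _ \<longleftrightarrow>
     (\<exists>\<Theta> :: ('z \<Rightarrow> 'k) set. finite \<Theta> \<and> (\<forall>\<theta>\<in>\<Theta>. is_character \<theta>) \<and>
        L = {v. \<forall>\<theta>\<in>\<Theta>. \<theta> v = 1})"

text \<open>Index of a subgroup L of an additive group: number of cosets v + L
  (0 if there are infinitely many).\<close>
definition lattice_index :: "('z::plus) set \<Rightarrow> nat" where
  "lattice_index L = card ((\<lambda>v. (\<lambda>w. v + w) ` L) ` UNIV)"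

end

theory Submission
  imports Defs "HOL-Algebra.Sylow" "HOL-Algebra.Multiplicative_Group" "HOL-Number_Theory.Residues"
    "HOL-Library.FuncSet"
begin


lemma sum_fun_app: "(\<Sum>a\<in>A. g a) x = (\<Sum>a\<in>A. g a x)"
  by (induct A rule: infinite_finite_induct) auto

lemma module_fscale: "Modules.module (fscale :: 'k::field \<Rightarrow> ('z \<Rightarrow> 'k) \<Rightarrow> _)"
  unfolding Modules.module_def fscale_def by (auto simp: fun_eq_iff algebra_simps)

lemma CHAR_f:
  fixes p r :: nat
  assumes "prime p" "r > 0" "CARD('f::{field,finite}) = p ^ r"
  shows "CHAR('f) = p"
proof -
  have pos: "CHAR('f) > 0" by (rule finite_imp_CHAR_pos) simp
  hence pr: "prime CHAR('f)" by (rule prime_CHAR_semidom)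
  have "CHAR('f) dvd p ^ r" using CHAR_dvd_CARD[where 'a='f] assms(3) by simp
  hence "CHAR('f) dvd p" using pr prime_dvd_power by blast
  thus ?thesis using pr assms(1) by (simp add: primes_dvd_imp_eq)
qed

lemma frob_one:
  fixes z :: "'a::field"
  assumes "prime CHAR('a)" "z ^ (CHAR('a) ^ a) = 1"
  shows "z = 1"
proof -
  have "((z - 1) + 1) ^ (CHAR('a) ^ a) = (z - 1) ^ (CHAR('a) ^ a) + 1 ^ (CHAR('a) ^ a)"
    by (rule freshmans_dream'[OF assms(1) refl])
  hence "(z - 1) ^ (CHAR('a) ^ a) = 0" using assms(2) by simp
  thus ?thesis by simp
qed

lemma map_poly_to_ac_add: "map_poly to_ac (a + b) = map_poly to_ac a + map_poly to_ac b"
  by (rule poly_eqI) (simp add: coeff_map_poly)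

lemma map_poly_to_ac_mult: "map_poly to_ac (a * b) = map_poly to_ac a * map_poly to_ac b"
  by (rule poly_eqI) (simp add: coeff_map_poly coeff_mult to_ac_sum)

lemma alg_root_of_unity:
  fixes x :: "'f::{field,finite} alg_closure"
  assumes "x \<noteq> 0" shows "\<exists>m>0. x ^ m = 1"
proof -
  obtain P :: "'f poly" where P: "P \<noteq> 0" "poly (map_poly to_ac P) x = 0"
    by (rule alg_closure_algebraic)
  define ev where "ev q = poly (map_poly to_ac q) x" for q
  define d where "d = degree P"
  have key: "x ^ k \<in> ev ` Poly ` {xs. set xs \<subseteq> UNIV \<and> length xs \<le> d}" for k
  proof -
    define q where "q = monom 1 k mod P"
    have "monom 1 k = (monom 1 k div P) * P + q" unfolding q_def by simp
    hence "ev (monom 1 k) = ev (monom 1 k div P) * ev P + ev q"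
      unfolding ev_def by (metis map_poly_to_ac_add map_poly_to_ac_mult poly_add poly_mult)
    moreover have "ev (monom 1 k) = x ^ k" unfolding ev_def by (simp add: map_poly_monom poly_monom)
    moreover have "ev P = 0" using P unfolding ev_def by simp
    ultimately have xk: "x ^ k = ev q" by simp
    have "length (coeffs q) \<le> d"
    proof (cases "q = 0")
      case False
      hence "degree q < degree P" unfolding q_def using P(1) degree_mod_less' by blast
      thus ?thesis using False by (simp add: length_coeffs_degree d_def)
    qed simp
    thus ?thesis using xk by (intro image_eqI[of _ _ q] image_eqI[of _ _ "coeffs q"]) auto
  qed
  have fin: "finite (ev ` Poly ` {xs :: 'f list. set xs \<subseteq> UNIV \<and> length xs \<le> d})"
    by (intro finite_imageI finite_lists_length_le) simp
  have "\<not> inj (\<lambda>k::nat. x ^ k)"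
  proof
    assume "inj (\<lambda>k::nat. x ^ k)"
    moreover have "finite (range (\<lambda>k::nat. x ^ k))"
      using key by (intro finite_subset[OF _ fin]) auto
    ultimately have "finite (UNIV :: nat set)"
      using finite_imageD by blast
    thus False by simp
  qed
  then obtain a b :: nat where ab: "a \<noteq> b" "x ^ a = x ^ b" unfolding inj_def by blast
  have main: "x ^ (b - a) = 1" if "a < b" "x ^ a = x ^ b" for a b
  proof -
    have "x ^ b = x ^ a * x ^ (b - a)" using that by (metis le_add_diff_inverse less_imp_le power_add)
    thus ?thesis using that assms by simp
  qed
  show ?thesis
  proof (cases "a < b")
    case True thus ?thesis using main ab by (intro exI[of _ "b - a"]) auto
  next
    case False hence "b < a" using ab by simp
    thus ?thesis using main ab by (intro exI[of _ "a - b"]) auto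
  qed
qed



lemma roots_unity_poly: "{z::'a::field. z ^ N = 1} = {z. poly ([:-1:] + monom 1 N) z = 0}"
  by (auto simp: poly_monom)

lemma degree_roots_unity_poly:
  assumes "N > 0" shows "degree ([:-1:] + monom (1::'a::field) N) = N"
  using assms by (subst degree_add_eq_right) (auto simp: degree_monom_eq)

lemma roots_unity_poly_nz:
  assumes "N > 0" shows "[:-1:] + monom (1::'a::field) N \<noteq> 0"
  using degree_roots_unity_poly[OF assms] assms by (metis degree_0 less_irrefl)

lemma finite_roots_unity_gen:
  assumes "N > 0" shows "finite {z::'a::field. z ^ N = 1}"
  unfolding roots_unity_poly using poly_roots_finite[OF roots_unity_poly_nz[OF assms]] .

lemma card_roots_unity_le:
  assumes "N > 0" shows "card {z::'a::field. z ^ N = 1} \<le> N"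
proof -
  have h1: "[:-1:] + monom (1::'a) N \<noteq> 0" by (rule roots_unity_poly_nz[OF assms])
  have "card {z::'a. poly ([:-1:] + monom 1 N) z = 0} \<le> degree ([:-1:] + monom (1::'a) N)"
    by (rule card_poly_roots_bound[OF h1])
  also have "\<dots> = N" by (rule degree_roots_unity_poly[OF assms])
  finally have "card {z::'a. poly ([:-1:] + monom 1 N) z = 0} \<le> N" .
  thus ?thesis unfolding roots_unity_poly .
qed

lemma card_roots_unity_alg:
  assumes "N > 0" "of_nat N \<noteq> (0::'a::alg_closed_field)"
  shows "card {z::'a. z ^ N = 1} = N"
proof -
  define P :: "'a poly" where "P = [:-1:] + monom 1 N"
  have P0: "P \<noteq> 0" unfolding P_def by (rule roots_unity_poly_nz[OF assms(1)])
  have degP: "degree P = N" unfolding P_def by (rule degree_roots_unity_poly[OF assms(1)])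
  have lc: "lead_coeff P = 1" using assms(1) unfolding degP by (cases N) (simp_all add: P_def)
  obtain A where A: "size A = N" "P = smult (lead_coeff P) (\<Prod>x\<in>#A. [:-x, 1:])"
    using alg_closed_imp_factorization[OF P0] degP by auto
  have PA: "P = (\<Prod>x\<in>#A. [:-x, 1:])" using A(2) lc by simp
  have roots: "{z. z ^ N = 1} = set_mset A"
  proof -
    have "{z. z ^ N = 1} = {z. poly P z = 0}" unfolding P_def by (rule roots_unity_poly)
    also have "\<dots> = set_mset A" unfolding PA by (auto simp: poly_prod_mset prod_mset_zero_iff)
    finally show ?thesis .
  qed
  have cnt: "count A y = 1" if "y \<in># A" for y
  proof (rule ccontr)
    assume "count A y \<noteq> 1"
    moreover have "count A y > 0" using that by simp
    ultimately have "count A y \<ge> 2" by linarith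
    hence "y \<in># A - {#y#}" by (simp add: in_diff_count)
    define B where "B = A - {#y#} - {#y#}"
    have B1: "A = add_mset y (A - {#y#})" using that by (simp add: insert_DiffM)
    have B2: "A - {#y#} = add_mset y B" unfolding B_def using insert_DiffM[OF \<open>y \<in># A - {#y#}\<close>] by (rule sym)
    have B: "A = add_mset y (add_mset y B)" using B1 B2 by simp
    define L where "L = [:-y, 1:]"
    define Q where "Q = (\<Prod>x\<in>#B. [:-x, 1:])"
    have L0: "poly L y = 0" by (simp add: L_def)
    have "P = L * (L * Q)" unfolding PA B L_def Q_def by (simp add: mult.assoc)
    hence "pderiv P = pderiv L * (L * Q) + L * (pderiv L * Q + L * pderiv Q)"
      by (simp add: pderiv_mult)
    hence "poly (pderiv P) y = 0" by (simp add: L0)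
    moreover have "pderiv P = monom (of_nat N) (N - 1)" unfolding P_def
      by (simp add: pderiv_add pderiv_monom)
    moreover have yN: "y ^ N = 1" using that roots by auto
    have "y \<noteq> 0" using yN assms(1) by (auto simp: power_0_left)
    ultimately show False using assms(2) \<open>y \<noteq> 0\<close> by (simp add: poly_monom)
  qed
  have "N = sum (count A) (set_mset A)" using A(1) by (simp add: size_multiset_overloaded_eq)
  also have "\<dots> = card (set_mset A)" using cnt by simp
  finally show ?thesis using roots by simp
qed

lemma power_mod_unity:
  fixes z :: "'a::comm_monoid_mult"
  assumes "z ^ N = 1" shows "z ^ k = z ^ (k mod N)"
proof -
  have e: "N * (k div N) + k mod N = k" by simp
  have "z ^ k = z ^ (N * (k div N) + k mod N)" by (simp only: e)
  also have "\<dots> = (z ^ N) ^ (k div N) * z ^ (k mod N)" by (simp only: power_add power_mult)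
  also have "\<dots> = z ^ (k mod N)" using assms by simp
  finally show ?thesis .
qed

lemma sum_roots_unity_gen:
  assumes "N > 0" "card {z::'a::field. z ^ N = 1} = N" "0 < k" "k < N"
  shows "(\<Sum>z\<in>{z::'a. z ^ N = 1}. z ^ k) = 0"
proof -
  define R where "R = {z::'a. z ^ N = 1}"
  have finR: "finite R" unfolding R_def using finite_roots_unity_gen[OF assms(1)] .
  obtain w where w: "w \<in> R" "w ^ k \<noteq> 1"
  proof (rule ccontr)
    assume "\<not> thesis"
    hence "\<forall>w\<in>R. w ^ k = 1" using that by blast
    hence "R \<subseteq> {z. z ^ k = 1}" by auto
    hence "card R \<le> card {z::'a. z ^ k = 1}"
      by (intro card_mono finite_roots_unity_gen) (use assms in auto)
    also have "\<dots> \<le> k" by (rule card_roots_unity_le) (use assms in auto)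
    finally show False using assms unfolding R_def by simp
  qed
  have w0: "w \<noteq> 0" using w assms(1) unfolding R_def by (auto simp: power_0_left)
  have "(\<Sum>z\<in>R. z ^ k) = (\<Sum>z\<in>R. (w * z) ^ k)"
    by (rule sum.reindex_bij_witness[of _ "\<lambda>z. w * z" "\<lambda>z. z / w"])
       (use w w0 in \<open>auto simp: R_def power_mult_distrib power_divide\<close>)
  also have "\<dots> = w ^ k * (\<Sum>z\<in>R. z ^ k)" by (simp add: power_mult_distrib sum_distrib_left)
  finally have "(1 - w ^ k) * (\<Sum>z\<in>R. z ^ k) = 0" by (simp add: algebra_simps)
  thus ?thesis using w unfolding R_def by simp
qed

definition emod :: "nat \<Rightarrow> int \<Rightarrow> nat" where "emod N t = nat (t mod int N)"

lemma emod_add: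
  assumes "N > 0" shows "(emod N a + emod N b) mod N = emod N (a + b)"
proof -
  have "int ((emod N a + emod N b) mod N) = (a mod N + b mod N) mod N"
    using assms by (simp add: emod_def zmod_int)
  also have "\<dots> = (a + b) mod N" by (simp add: mod_add_eq)
  finally show ?thesis using assms by (simp add: emod_def)
qed

lemma emod_power_add:
  fixes z :: "'a::comm_monoid_mult"
  assumes "N > 0" "z ^ N = 1"
  shows "z ^ emod N (a + b) = z ^ emod N a * z ^ emod N b"
proof -
  have "z ^ emod N (a + b) = z ^ ((emod N a + emod N b) mod N)" using emod_add[OF assms(1)] by simp
  also have "\<dots> = z ^ (emod N a + emod N b)" using power_mod_unity[OF assms(2)] by simp
  finally show ?thesis by (simp add: power_add)
qed

lemma emod_less: "N > 0 \<Longrightarrow> emod N t < N"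
  unfolding emod_def by (simp add: nat_less_iff)

lemma emod_zero_iff: assumes "N > 0" shows "emod N t = 0 \<longleftrightarrow> int N dvd t"
proof -
  have "0 \<le> t mod int N" using assms by simp
  hence "nat (t mod int N) = 0 \<longleftrightarrow> t mod int N = 0" by simp
  thus ?thesis unfolding emod_def by (simp add: dvd_eq_mod_eq_0)
qed

lemma sum_roots_unity_delta:
  assumes "N > 0" "card {z::'a::field. z ^ N = 1} = N"
  shows "(\<Sum>z\<in>{z::'a. z ^ N = 1}. z ^ emod N t) = (if int N dvd t then of_nat N else 0)"
proof (cases "int N dvd t")
  case True
  hence "emod N t = 0" using emod_zero_iff[OF assms(1)] by simp
  hence "(\<Sum>z\<in>{z::'a. z ^ N = 1}. z ^ emod N t) = of_nat (card {z::'a. z ^ N = 1})" by simp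
  thus ?thesis using True assms(2) by simp
next
  case False
  hence "emod N t \<noteq> 0" using emod_zero_iff[OF assms(1), of t] by simp
  hence "emod N t > 0" by simp
  from sum_roots_unity_gen[OF assms this emod_less[OF assms(1)]] False show ?thesis by simp
qed




interpretation fm: Modules.module "fscale :: 'k::field \<Rightarrow> ('z \<Rightarrow> 'k) \<Rightarrow> _"
  by (rule module_fscale)

definition smul :: "int \<Rightarrow> int ^ 'n \<Rightarrow> int ^ 'n" where
  "smul k v = (\<chi> i. k * v $ i)"

definition chi :: "nat \<Rightarrow> ('n \<Rightarrow> 'a) \<Rightarrow> int ^ 'n \<Rightarrow> 'a::field" where
  "chi N z x = (\<Prod>i\<in>UNIV. z i ^ emod N (x $ i))"

lemma chi_char:
  assumes "N > 0" "\<forall>i. z i ^ N = (1::'a::field)"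
  shows "is_character (chi N (z :: 'n::finite \<Rightarrow> 'a))"
proof -
  have nz: "z i \<noteq> 0" for i using assms(2)[rule_format, of i] assms(1) by (cases "z i = 0") (auto simp: power_0_left)
  show ?thesis unfolding is_character_def chi_def
    using assms nz by (auto simp: emod_power_add prod.distrib)
qed

lemma chi_add_neg:
  assumes "N > 0" "\<forall>i. z i ^ N = (1::'a::field)"
  shows "chi N z (x - a) = chi N z x * chi N (z :: 'n::finite \<Rightarrow> 'a) (- a)"
proof -
  have h: "chi N z (x + - a) = chi N z x * chi N z (-a)"
    using chi_char[OF assms] unfolding is_character_def by blast
  thus ?thesis by simp
qed

lemma artin:
  fixes E :: "('z::monoid_add \<Rightarrow> 'k::field) set"
  assumes "fsubspace E" "translation_invariant E"
  shows "finite S \<Longrightarrow> \<forall>th\<in>S. is_character th \<Longrightarrow> (\<lambda>x. \<Sum>th\<in>S. u th * th x) \<in> E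
    \<Longrightarrow> th0 \<in> S \<Longrightarrow> u th0 \<noteq> 0 \<Longrightarrow> th0 \<in> E"
proof (induction "card S" arbitrary: S u th0 rule: less_induct)
  case less
  define F where "F = (\<lambda>x. \<Sum>th\<in>S. u th * th x)"
  have FE: "F \<in> E" unfolding F_def by (rule less.prems(3))
  show ?case
  proof (cases "\<exists>th'\<in>S. th' \<noteq> th0")
    case False
    hence S: "S = {th0}" using less.prems(4) by blast
    have "th0 = fscale (1 / u th0) F"
      using less.prems by (simp add: S F_def fscale_def fun_eq_iff)
    moreover have "fscale (1 / u th0) F \<in> E" by (rule fm.subspace_scale[OF assms(1) FE])
    ultimately show ?thesis by simp
  next
    case True
    then obtain th' where ch': "th' \<in> S" "th' \<noteq> th0" by blast
    have "\<exists>v. th0 v \<noteq> th' v"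
    proof (rule ccontr)
      assume "\<not> (\<exists>v. th0 v \<noteq> th' v)"
      hence "th0 = th'" by (simp add: fun_eq_iff)
      thus False using ch'(2) by simp
    qed
    then obtain v where v: "th0 v \<noteq> th' v" by blast
    define G where "G = transl v F - fscale (th' v) F"
    have GE: "G \<in> E" unfolding G_def
      using assms FE unfolding translation_invariant_def
      by (intro fm.subspace_diff fm.subspace_scale) auto
    have chars: "th (x + v) = th x * th v" if "th \<in> S" for th x
    proof -
      have "is_character th" using less.prems(2) that by blast
      thus ?thesis unfolding is_character_def by blast
    qed
    have "G x = (\<Sum>th\<in>S. (u th * (th v - th' v)) * th x)" for x
    proof -
      have "G x = (\<Sum>th\<in>S. u th * th (x + v)) - th' v * (\<Sum>th\<in>S. u th * th x)"
        by (simp add: G_def transl_def fscale_def F_def)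
      also have "\<dots> = (\<Sum>th\<in>S. (u th * (th v - th' v)) * th x)"
        by (simp add: chars sum_distrib_left sum_subtractf[symmetric] algebra_simps cong: sum.cong)
      finally show ?thesis .
    qed
    also have "(\<Sum>th\<in>S. (u th * (th v - th' v)) * th x) = (\<Sum>th\<in>S - {th'}. (u th * (th v - th' v)) * th x)" for x
      using less.prems ch' by (intro sum.mono_neutral_right) auto
    finally have "G = (\<lambda>x. \<Sum>th\<in>S - {th'}. (u th * (th v - th' v)) * th x)" by (simp add: fun_eq_iff)
    hence GE': "(\<lambda>x. \<Sum>th\<in>S - {th'}. (u th * (th v - th' v)) * th x) \<in> E" using GE by simp
    have "card (S - {th'}) < card S" using less.prems ch' by (meson card_Diff1_less)
    moreover have "finite (S - {th'})" using less.prems(1) by simp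
    moreover have "\<forall>th\<in>S - {th'}. is_character th" using less.prems(2) by blast
    moreover have "th0 \<in> S - {th'}" using less.prems(4) ch'(2) by blast
    moreover have "u th0 * (th0 v - th' v) \<noteq> 0" using less.prems(5) v by simp
    ultimately show ?thesis using less.hyps[of "S - {th'}" "\<lambda>th. u th * (th v - th' v)" th0] GE' by blast
  qed
qed


lemma periodic_in_span:
  fixes f :: "int ^ 'n \<Rightarrow> 'a::field"
  assumes N: "N > 0" and cardR: "card {z::'a. z ^ N = 1} = N" and N0: "of_nat N \<noteq> (0::'a)"
    and per: "\<And>x v. f (x + smul (int N) v) = f x"
  shows "f \<in> fspan (chi N ` (PiE UNIV (\<lambda>_::'n. {z::'a. z ^ N = 1})))"
proof -
  define R where "R = {z::'a. z ^ N = 1}"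
  define Zs where "Zs = PiE (UNIV::'n set) (\<lambda>_. R)"
  define A where "A = vec_lambda ` PiE (UNIV::'n set) (\<lambda>_. {0..<int N})"
  have finR: "finite R" unfolding R_def by (rule finite_roots_unity_gen[OF N])
  have finZs: "finite Zs" unfolding Zs_def using finR by (intro finite_PiE) auto
  have finA: "finite A" unfolding A_def by (intro finite_imageI finite_PiE) auto
  have Zs_root: "\<forall>i. g i ^ N = 1" if "g \<in> Zs" for g using that unfolding Zs_def R_def by (auto simp: PiE_iff)
  define amod where "amod x = (\<chi> i. x $ i mod int N)" for x :: "int^'n"
  have amodA: "amod x \<in> A" for x
  proof -
    have "(\<lambda>i. x $ i mod int N) \<in> PiE UNIV (\<lambda>_. {0..<int N})" using N by (auto simp: PiE_iff)
    thus ?thesis unfolding A_def amod_def by (rule imageI)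
  qed
  have A_range: "0 \<le> a $ i \<and> a $ i < int N" if "a \<in> A" for a :: "int ^ 'n" and i
    using that unfolding A_def by (auto simp: PiE_iff)
  define D where "D a x = (\<Prod>i\<in>UNIV. (if int N dvd (x $ i - a $ i) then 1 else (0::'a)))" for a x :: "int^'n"
  have D_eq: "D a x = (if a = amod x then 1 else 0)" if a: "a \<in> A" for a x
  proof -
    have iff: "int N dvd (x $ i - a $ i) \<longleftrightarrow> a $ i = x $ i mod int N" for i
    proof -
      have m: "a $ i mod int N = a $ i" using A_range[OF a, of i] by (simp add: mod_pos_pos_trivial)
      have "int N dvd (x $ i - a $ i) \<longleftrightarrow> x $ i mod int N = a $ i mod int N"
        by (rule mod_eq_dvd_iff[symmetric])
      thus ?thesis using m by auto
    qed
    have all: "(\<forall>i. int N dvd (x $ i - a $ i)) \<longleftrightarrow> a = amod x"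
      unfolding iff amod_def by (simp add: vec_eq_iff)
    show ?thesis
    proof (cases "a = amod x")
      case True
      thus ?thesis using all unfolding D_def by simp
    next
      case False
      then obtain i where i: "\<not> int N dvd (x $ i - a $ i)" using all by blast
      have "D a x = 0" unfolding D_def by (rule prod_zero) (use i in auto)
      thus ?thesis using False by simp
    qed
  qed
  have f_expand: "f x = (\<Sum>a\<in>A. f a * D a x)" for x
  proof -
    have "(\<Sum>a\<in>A. f a * D a x) = (\<Sum>a\<in>A. if a = amod x then f a else 0)"
      using D_eq by (intro sum.cong) auto
    also have "\<dots> = f (amod x)" using amodA finA by (simp add: sum.delta)
    also have "x = amod x + smul (int N) (\<chi> i. x $ i div int N)"
      by (simp add: vec_eq_iff amod_def smul_def)
    hence "f (amod x) = f x" using per by metis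
    finally show ?thesis by simp
  qed
  define c where "c a g = (\<Prod>i\<in>UNIV. (1 / of_nat N) * g i ^ emod N (- (a $ i)))" for a :: "int^'n" and g :: "'n \<Rightarrow> 'a"
  have D_char: "D a x = (\<Sum>g\<in>Zs. c a g * chi N g x)" for a x
  proof -
    have "D a x = (\<Prod>i\<in>UNIV. (1 / of_nat N) * (\<Sum>z\<in>R. z ^ emod N (x $ i - a $ i)))"
      unfolding D_def R_def using sum_roots_unity_delta[OF N cardR] N0 by (intro prod.cong) auto
    also have "\<dots> = (\<Prod>i\<in>UNIV. \<Sum>z\<in>R. (1 / of_nat N) * z ^ emod N (x $ i - a $ i))"
      by (simp add: sum_distrib_left)
    also have "\<dots> = (\<Sum>g\<in>Zs. \<Prod>i\<in>UNIV. (1 / of_nat N) * g i ^ emod N (x $ i - a $ i))"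
      unfolding Zs_def by (rule prod_sum_PiE) (auto simp: finR)
    also have "\<dots> = (\<Sum>g\<in>Zs. c a g * chi N g x)"
    proof (rule sum.cong[OF refl])
      fix g assume g: "g \<in> Zs"
      have "g i ^ emod N (x $ i - a $ i) = g i ^ emod N (x $ i) * g i ^ emod N (- (a $ i))" for i
        using emod_power_add[OF N, of "g i" "x $ i" "- (a $ i)"] Zs_root[OF g] by simp
      hence "(\<Prod>i\<in>UNIV. (1 / of_nat N) * g i ^ emod N (x $ i - a $ i))
          = (\<Prod>i\<in>UNIV. g i ^ emod N (x $ i) * ((1 / of_nat N) * g i ^ emod N (- (a $ i))))"
        by (intro prod.cong) (simp_all only: mult_ac)
      also have "\<dots> = chi N g x * c a g" unfolding c_def chi_def by (rule prod.distrib)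
      finally show "(\<Prod>i\<in>UNIV. (1 / of_nat N) * g i ^ emod N (x $ i - a $ i)) = c a g * chi N g x"
        by (simp only: mult.commute)
    qed
    finally show ?thesis .
  qed
  have feq: "f = (\<Sum>a\<in>A. \<Sum>g\<in>Zs. fscale (f a * c a g) (chi N g))"
  proof (rule ext)
    fix x
    have "f x = (\<Sum>a\<in>A. f a * D a x)" by (rule f_expand)
    also have "\<dots> = (\<Sum>a\<in>A. \<Sum>g\<in>Zs. f a * c a g * chi N g x)"
      by (simp add: D_char sum_distrib_left mult.assoc)
    also have "\<dots> = (\<Sum>a\<in>A. \<Sum>g\<in>Zs. fscale (f a * c a g) (chi N g)) x"
      by (simp add: sum_fun_app fscale_def)
    finally show "f x = (\<Sum>a\<in>A. \<Sum>g\<in>Zs. fscale (f a * c a g) (chi N g)) x" .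
  qed
  have "(\<Sum>a\<in>A. \<Sum>g\<in>Zs. fscale (f a * c a g) (chi N g)) \<in> fspan (chi N ` Zs)"
    by (intro fm.span_sum fm.span_scale fm.span_base imageI)
  thus ?thesis using feq unfolding Zs_def R_def by simp
qed




definition nmul :: "nat \<Rightarrow> 'a::comm_monoid_add \<Rightarrow> 'a" where
  "nmul n v = (\<Sum>_\<in>{..<n}. v)"

lemma nmul_0 [simp]: "nmul 0 v = 0" by (simp add: nmul_def)
lemma nmul_Suc [simp]: "nmul (Suc n) v = nmul n v + v" by (simp add: nmul_def add.commute)

definition AG :: "'a::ab_group_add monoid" where
  "AG = \<lparr>carrier = UNIV, monoid.mult = (+), one = 0\<rparr>"

lemma AG_simps [simp]: "carrier AG = UNIV" "x \<otimes>\<^bsub>AG\<^esub> y = x + y" "\<one>\<^bsub>AG\<^esub> = 0"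
  by (simp_all add: AG_def)

lemma AG_comm_group: "comm_group (AG :: 'a::ab_group_add monoid)"
  apply (rule comm_groupI)
  apply (auto simp: add.assoc add.commute)
  subgoal for x by (rule exI[of _ "- x"]) simp
  done

lemma AG_group: "group (AG :: 'a::ab_group_add monoid)"
  using AG_comm_group comm_group.axioms(2) by blast

lemma AG_inv: "inv\<^bsub>AG\<^esub> x = - (x :: 'a::ab_group_add)"
  by (rule group.inv_equality[OF AG_group]) simp_all

lemma AG_pow: "x [^]\<^bsub>AG\<^esub> (n::nat) = nmul n (x :: 'a::ab_group_add)"
  by (induct n) simp_all

lemma AG_subgroup:
  fixes L :: "'a::ab_group_add set"
  assumes "0 \<in> L" "\<And>a b. a \<in> L \<Longrightarrow> b \<in> L \<Longrightarrow> a + b \<in> L" "\<And>a. a \<in> L \<Longrightarrow> - a \<in> L"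
  shows "subgroup L AG"
  by (rule subgroup.intro) (use assms in \<open>auto simp: AG_inv\<close>)

lemma AG_carrier_Mod:
  "carrier (AG Mod L) = (\<lambda>v. (\<lambda>w. v + w) ` (L :: 'a::ab_group_add set)) ` UNIV"
proof -
  have "r_coset AG L v = (\<lambda>w. v + w) ` L" for v
    unfolding r_coset_def by (auto simp: add.commute)
  thus ?thesis unfolding carrier_FactGroup by simp
qed

lemma AG_order_Mod: "Coset.order (AG Mod (L :: 'a::ab_group_add set)) = lattice_index L"
  unfolding Coset.order_def lattice_index_def AG_carrier_Mod ..

lemma AG_rcos_eq_imp:
  fixes L :: "'a::ab_group_add set"
  assumes "subgroup L AG" "r_coset AG L w = L"
  shows "w \<in> L"
proof -
  have "w \<in> r_coset AG L w" by (rule group.rcos_self[OF AG_group]) (use assms in auto)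
  thus ?thesis using assms by simp
qed

lemma index_mult:
  fixes L :: "'a::ab_group_add set"
  assumes sub: "subgroup L AG" and pos: "lattice_index L > 0"
  shows "nmul (lattice_index L) v \<in> L"
proof -
  have nrm: "normal L AG" by (rule comm_group.subgroup_imp_normal[OF AG_comm_group sub])
  have grp: "group (AG Mod L)" by (rule normal.factorgroup_is_group[OF nrm])
  have fin: "finite (carrier (AG Mod L))"
  proof -
    have "card (carrier (AG Mod L)) > 0" using pos AG_order_Mod[of L] unfolding Coset.order_def by simp
    thus ?thesis by (rule card_ge_0_finite)
  qed
  have X: "r_coset AG L v \<in> carrier (AG Mod L)" unfolding carrier_FactGroup by simp
  have "r_coset AG L v [^]\<^bsub>AG Mod L\<^esub> Coset.order (AG Mod L) = \<one>\<^bsub>AG Mod L\<^esub>"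
    by (rule group.pow_order_eq_1[OF grp X])
  hence "r_coset AG L (nmul (lattice_index L) v) = L"
    using normal.FactGroup_pow[OF nrm, of v "Coset.order (AG Mod L)"] by (simp add: AG_order_Mod AG_pow)
  thus ?thesis by (rule AG_rcos_eq_imp[OF sub])
qed

lemma index_sylow:
  fixes L :: "'a::ab_group_add set"
  assumes sub: "subgroup L AG" and pos: "lattice_index L > 0"
    and q: "prime q" and qd: "q dvd lattice_index L"
  shows "\<exists>v a. v \<notin> L \<and> nmul (q ^ a) v \<in> L"
proof -
  define N where "N = lattice_index L"
  define m where "m = multiplicity q N"
  have nrm: "normal L AG" by (rule comm_group.subgroup_imp_normal[OF AG_comm_group sub])
  have grp: "group (AG Mod L)" by (rule normal.factorgroup_is_group[OF nrm])
  have fin: "finite (carrier (AG Mod L))"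
  proof -
    have "card (carrier (AG Mod L)) > 0" using pos AG_order_Mod[of L] unfolding Coset.order_def by simp
    thus ?thesis by (rule card_ge_0_finite)
  qed
  have ord: "Coset.order (AG Mod L) = q ^ m * (N div q ^ m)"
    unfolding AG_order_Mod N_def m_def by (simp add: multiplicity_dvd)
  obtain Q where Q: "subgroup Q (AG Mod L)" "card Q = q ^ m"
    using sylow_thm[OF q grp ord fin] by blast
  have N0: "N \<noteq> 0" using pos unfolding N_def by simp
  have qd': "q dvd N" using qd unfolding N_def .
  have m1: "m > 0" unfolding m_def
    using prime_multiplicity_gt_zero_iff[OF prime_imp_prime_elem[OF q] N0] qd' by blast
  have q2: "q \<ge> 2" using q by (rule prime_ge_2_nat)
  have "q ^ 1 \<le> q ^ m" using m1 q2 by (intro power_increasing) auto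
  hence "card Q \<ge> 2" using Q(2) q2 by simp
  moreover have "card Q > 0" using \<open>card Q \<ge> 2\<close> by linarith
  hence finQ: "finite Q" by (rule card_ge_0_finite)
  have "\<not> Q \<subseteq> {L}"
  proof
    assume "Q \<subseteq> {L}"
    hence "card Q \<le> 1" using card_mono[of "{L}" Q] by simp
    thus False using \<open>card Q \<ge> 2\<close> by simp
  qed
  then obtain Xc where Xc: "Xc \<in> Q" "Xc \<noteq> L" by blast
  define HQ where "HQ = (AG Mod L)\<lparr>carrier := Q\<rparr>"
  have grpH: "group HQ" unfolding HQ_def by (rule subgroup.subgroup_is_group[OF Q(1) grp])
  have XH: "Xc \<in> carrier HQ" unfolding HQ_def using Xc by simp
  have powH: "Xc [^]\<^bsub>HQ\<^esub> (n::nat) = Xc [^]\<^bsub>AG Mod L\<^esub> n" for n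
    unfolding HQ_def by (induct n) simp_all
  have "Xc [^]\<^bsub>HQ\<^esub> Coset.order HQ = \<one>\<^bsub>HQ\<^esub>" by (rule group.pow_order_eq_1[OF grpH XH])
  hence X1: "Xc [^]\<^bsub>AG Mod L\<^esub> (q ^ m) = L" using Q(2) unfolding powH by (simp add: HQ_def Coset.order_def)
  have "Xc \<in> carrier (AG Mod L)" using Xc(1) subgroup.subset[OF Q(1)] by blast
  then obtain v where v: "Xc = r_coset AG L v" unfolding carrier_FactGroup by auto
  have "v \<notin> L"
  proof
    assume "v \<in> L"
    hence "r_coset AG L v = L" by (rule subgroup.rcos_const[OF sub AG_group])
    thus False using Xc v by simp
  qed
  moreover have "r_coset AG L (nmul (q ^ m) v) = L"
    using X1 normal.FactGroup_pow[OF nrm, of v "q ^ m"] v by (simp add: AG_pow)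
  hence "nmul (q ^ m) v \<in> L" by (rule AG_rcos_eq_imp[OF sub])
  ultimately show ?thesis by blast
qed


lemma char_zero:
  assumes "is_character \<theta>" shows "\<theta> 0 = 1"
proof -
  have "\<theta> (0 + 0) = \<theta> 0 * \<theta> 0" using assms unfolding is_character_def by blast
  hence e: "\<theta> 0 * (\<theta> 0 - 1) = 0" by (simp add: algebra_simps)
  have "\<theta> 0 \<noteq> 0" using assms unfolding is_character_def by blast
  hence "\<theta> 0 - 1 = 0" using e by simp
  thus ?thesis by simp
qed

lemma char_add:
  assumes "is_character \<theta>" shows "\<theta> (x + y) = \<theta> x * \<theta> y"
  using assms unfolding is_character_def by blast

lemma char_nz:
  assumes "is_character \<theta>" shows "\<theta> x \<noteq> 0"
  using assms unfolding is_character_def by blast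

lemma char_neg:
  fixes \<theta> :: "'z::ab_group_add \<Rightarrow> 'k::field"
  assumes "is_character \<theta>" shows "\<theta> (- x) * \<theta> x = 1"
proof -
  have "\<theta> (- x + x) = \<theta> (- x) * \<theta> x" by (rule char_add[OF assms])
  thus ?thesis using char_zero[OF assms] by simp
qed

lemma char_nmul:
  fixes \<theta> :: "'z::ab_group_add \<Rightarrow> 'k::field"
  assumes "is_character \<theta>" shows "\<theta> (nmul n x) = \<theta> x ^ n"
  by (induct n) (simp_all add: char_zero[OF assms] char_add[OF assms] mult.commute)

lemma smul_nmul: "smul (int n) v = nmul n v"
proof (induct n)
  case 0 show ?case by (simp add: smul_def vec_eq_iff)
next
  case (Suc n)
  have "smul (int (Suc n)) v = smul (int n) v + v" by (simp add: smul_def vec_eq_iff algebra_simps)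
  thus ?case using Suc by simp
qed

lemma period_lattice_subgroup:
  fixes E :: "('z::ab_group_add \<Rightarrow> 'k) set"
  shows "subgroup (period_lattice E) AG"
proof (rule AG_subgroup)
  show "0 \<in> period_lattice E" by (simp add: period_lattice_def transl_def)
next
  fix a b assume a: "a \<in> period_lattice E" and b: "b \<in> period_lattice E"
  show "a + b \<in> period_lattice E" unfolding period_lattice_def
  proof (intro CollectI ballI)
    fix f assume f: "f \<in> E"
    have ta: "transl a f = f" using a f unfolding period_lattice_def by blast
    have fa: "f (x + a) = f x" for x using fun_cong[OF ta, of x] by (simp add: transl_def)
    have tb: "transl b f = f" using b f unfolding period_lattice_def by blast
    have fb: "f (x + b) = f x" for x using fun_cong[OF tb, of x] by (simp add: transl_def)
    show "transl (a + b) f = f" unfolding transl_def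
    proof
      fix x
      have "f (x + (a + b)) = f ((x + a) + b)" by (simp add: add.assoc)
      thus "f (x + (a + b)) = f x" using fa fb by simp
    qed
  qed
next
  fix a assume a: "a \<in> period_lattice E"
  show "- a \<in> period_lattice E" unfolding period_lattice_def
  proof (intro CollectI ballI)
    fix f assume f: "f \<in> E"
    have ta: "transl a f = f" using a f unfolding period_lattice_def by blast
    have fa: "f (x + a) = f x" for x using fun_cong[OF ta, of x] by (simp add: transl_def)
    show "transl (- a) f = f" unfolding transl_def
    proof
      fix x
      have "f (x + - a + a) = f (x + - a)" by (rule fa)
      moreover have "x + - a + a = x" by simp
      ultimately show "f (x + - a) = f x" by simp
    qed
  qed
qed

lemma char_smul_pow:
  fixes \<theta> :: "int ^ 'n \<Rightarrow> 'k::field"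
  assumes ch: "is_character \<theta>" and w: "\<theta> w ^ M = 1"
  shows "\<theta> (smul k w) ^ M = 1"
proof (cases "k \<ge> 0")
  case True
  obtain n where k: "k = int n" using nonneg_int_cases[OF True] by blast
  show ?thesis unfolding k smul_nmul char_nmul[OF ch]
    by (simp add: power_mult[symmetric] mult.commute) (simp add: power_mult w)
next
  case False
  hence "0 \<le> - k" by simp
  then obtain n where "- k = int n" using nonneg_int_cases by blast
  hence k: "k = - int n" by simp
  have e: "smul k w = - smul (int n) w" unfolding k by (simp add: smul_def vec_eq_iff)
  have "\<theta> (smul (int n) w) ^ M = 1" unfolding smul_nmul char_nmul[OF ch]
    by (simp add: power_mult[symmetric] mult.commute) (simp add: power_mult w)
  moreover have "\<theta> (- smul (int n) w) * \<theta> (smul (int n) w) = 1" by (rule char_neg[OF ch])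
  hence "(\<theta> (- smul (int n) w) * \<theta> (smul (int n) w)) ^ M = 1" by simp
  ultimately show ?thesis unfolding e by (simp add: power_mult_distrib)
qed

lemma char_pow_all:
  fixes \<theta> :: "int ^ 'n \<Rightarrow> 'k::field"
  assumes ch: "is_character \<theta>" and ax: "\<And>j. \<theta> (axis j 1) ^ M = 1"
  shows "\<theta> v ^ M = 1"
proof -
  define vJ where "vJ J = (\<chi> i. if i \<in> J then v $ i else (0::int))" for J :: "'n set"
  have all: "\<theta> (vJ J) ^ M = 1" if "finite J" for J
    using that
  proof (induct J rule: finite_induct)
    case empty
    have "vJ {} = 0" by (simp add: vJ_def vec_eq_iff)
    thus ?case using char_zero[OF ch] by simp
  next
    case (insert j J)
    have "vJ (insert j J) = vJ J + smul (v $ j) (axis j 1)"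
      using insert(2) by (auto simp: vJ_def smul_def vec_eq_iff axis_def)
    hence "\<theta> (vJ (insert j J)) ^ M = \<theta> (vJ J) ^ M * \<theta> (smul (v $ j) (axis j 1)) ^ M"
      by (simp add: char_add[OF ch] power_mult_distrib)
    thus ?case using insert(3) char_smul_pow[OF ch ax] by simp
  qed
  have "\<theta> (vJ UNIV) ^ M = 1" by (rule all) simp
  moreover have "vJ UNIV = v" by (simp add: vJ_def vec_eq_iff)
  ultimately show ?thesis by simp
qed

lemma CHAR_K:
  fixes p r :: nat
  assumes "prime p" "r > 0" "CARD('f::{field,finite}) = p ^ r"
  shows "CHAR('f alg_closure) = p"
  using CHAR_f[OF assms] by simp

lemma char_lattice_index:
  fixes \<Theta> :: "(int ^ 'n \<Rightarrow> 'f::{field,finite} alg_closure) set" and p r :: nat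
  assumes p: "prime p" "r > 0" "CARD('f) = p ^ r"
    and fin: "finite \<Theta>" and ch: "\<forall>\<theta>\<in>\<Theta>. is_character \<theta>"
  defines "L \<equiv> {v. \<forall>\<theta>\<in>\<Theta>. \<theta> v = 1}"
  shows "lattice_index L > 0 \<and> coprime (lattice_index L) p"
proof -
  have sub: "subgroup L AG"
  proof (rule AG_subgroup)
    show "0 \<in> L" unfolding L_def using ch char_zero by blast
  next
    fix a b assume "a \<in> L" "b \<in> L"
    thus "a + b \<in> L" unfolding L_def using ch char_add by fastforce
  next
    fix a assume a: "a \<in> L"
    show "- a \<in> L" unfolding L_def
    proof (intro CollectI ballI)
      fix \<theta> assume t: "\<theta> \<in> \<Theta>"
      have "\<theta> (- a) * \<theta> a = 1" using ch t char_neg by blast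
      moreover have "\<theta> a = 1" using a t unfolding L_def by blast
      ultimately show "\<theta> (- a) = 1" by simp
    qed
  qed
  define mo where "mo \<theta> j = (SOME m. m > 0 \<and> \<theta> (axis j (1::int)) ^ m = 1)" for \<theta> :: "int ^ 'n \<Rightarrow> 'f alg_closure" and j
  have mo: "mo \<theta> j > 0 \<and> \<theta> (axis j 1) ^ mo \<theta> j = 1" if "\<theta> \<in> \<Theta>" for \<theta> j
  proof -
    have "\<exists>m>0. \<theta> (axis j (1::int)) ^ m = 1"
      by (rule alg_root_of_unity) (use that ch char_nz in blast)
    thus ?thesis unfolding mo_def by (rule someI_ex)
  qed
  define M where "M = (\<Prod>\<theta>\<in>\<Theta>. \<Prod>j\<in>UNIV. mo \<theta> j)"
  have M0: "M > 0" unfolding M_def using mo by (simp add: prod_pos)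
  have Mpow: "\<theta> v ^ M = 1" if t: "\<theta> \<in> \<Theta>" for \<theta> v
  proof (rule char_pow_all)
    show "is_character \<theta>" using ch t by blast
    fix j
    have "mo \<theta> j dvd M" unfolding M_def
      using fin t by (intro dvd_trans[OF dvd_prodI[of UNIV j] dvd_prodI[of \<Theta> \<theta>]]) auto
    then obtain k where "M = mo \<theta> j * k" by blast
    thus "\<theta> (axis j 1) ^ M = 1" using mo[OF t, of j] by (simp add: power_mult)
  qed
  define \<Psi> where "\<Psi> v = (\<lambda>\<theta>. if \<theta> \<in> \<Theta> then \<theta> v else undefined)" for v
  have coset: "(\<lambda>w. v + w) ` L = {w. \<Psi> w = \<Psi> v}" for v
  proof (intro equalityI subsetI)
    fix w assume "w \<in> (\<lambda>w. v + w) ` L"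
    then obtain l where l: "l \<in> L" "w = v + l" by blast
    show "w \<in> {w. \<Psi> w = \<Psi> v}" unfolding \<Psi>_def
      using l ch char_add unfolding L_def by (fastforce simp: fun_eq_iff)
  next
    fix w assume w: "w \<in> {w. \<Psi> w = \<Psi> v}"
    have "w - v \<in> L" unfolding L_def
    proof (intro CollectI ballI)
      fix \<theta> assume t: "\<theta> \<in> \<Theta>"
      have c: "is_character \<theta>" using ch t by blast
      have "\<theta> w = \<theta> v" using w t unfolding \<Psi>_def by (auto simp: fun_eq_iff split: if_splits)
      have "\<theta> (w - v + v) = \<theta> (w - v) * \<theta> v" by (rule char_add[OF c])
      hence "\<theta> v = \<theta> (w - v) * \<theta> v" using \<open>\<theta> w = \<theta> v\<close> by simp
      thus "\<theta> (w - v) = 1" using char_nz[OF c, of v] by simp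
    qed
    moreover have "w = v + (w - v)" by simp
    ultimately show "w \<in> (\<lambda>w. v + w) ` L" by blast
  qed
  have "range \<Psi> \<subseteq> PiE \<Theta> (\<lambda>_. {z. z ^ M = 1})"
    using Mpow unfolding \<Psi>_def by (auto simp: PiE_iff)
  moreover have "finite (PiE \<Theta> (\<lambda>_. {z :: 'f alg_closure. z ^ M = 1}))"
    using fin finite_roots_unity_gen[OF M0] by (intro finite_PiE) auto
  ultimately have finPsi: "finite (range \<Psi>)" by (rule finite_subset)
  have cosets: "(\<lambda>v. (\<lambda>w. v + w) ` L) ` UNIV = (\<lambda>\<psi>. {w. \<Psi> w = \<psi>}) ` range \<Psi>"
    unfolding coset by auto
  have fincos: "finite ((\<lambda>v. (\<lambda>w. v + w) ` L) ` UNIV)" unfolding cosets using finPsi by simp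
  have pos: "lattice_index L > 0" unfolding lattice_index_def using fincos by (simp add: card_gt_0_iff)
  have "\<not> p dvd lattice_index L"
  proof
    assume "p dvd lattice_index L"
    then obtain v a where v: "v \<notin> L" "nmul (p ^ a) v \<in> L"
      using index_sylow[OF sub pos p(1)] by blast
    have "v \<in> L" unfolding L_def
    proof (intro CollectI ballI)
      fix \<theta> assume t: "\<theta> \<in> \<Theta>"
      have c: "is_character \<theta>" using ch t by blast
      have "\<theta> (nmul (p ^ a) v) = 1" using v(2) t unfolding L_def by blast
      hence "\<theta> v ^ (p ^ a) = 1" unfolding char_nmul[OF c] .
      hence "\<theta> v ^ (CHAR('f alg_closure) ^ a) = 1" using CHAR_K[OF p] by simp
      moreover have "prime CHAR('f alg_closure)" using CHAR_K[OF p] p(1) by simp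
      ultimately show "\<theta> v = 1" using frob_one by blast
    qed
    thus False using v(1) by simp
  qed
  hence "coprime p (lattice_index L)" using p(1) by (simp add: prime_imp_coprime)
  thus ?thesis using pos by (simp add: coprime_commute)
qed


theorem proposition5p11:
  fixes p r :: nat
    and E :: "(int ^ 'n \<Rightarrow> 'f::{field,finite} alg_closure) set"
  assumes "prime p" and "r > 0" and "CARD('f) = p ^ r"
    and "fin_dim_subspace E"
    and "translation_invariant E"
  shows "(characteristic_subspace E \<longleftrightarrow>
            characteristic_sublattice (period_lattice E) TYPE('f alg_closure))
       \<and> (characteristic_subspace E \<longleftrightarrow>
            (lattice_index (period_lattice E) > 0 \<and> coprime (lattice_index (period_lattice E)) p))"
proof -
  let ?L = "period_lattice E"
  have CHK: "CHAR('f alg_closure) = p" by (rule CHAR_K[OF assms(1-3)])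
  have sub: "fsubspace E" using assms(4) unfolding fin_dim_subspace_def by blast
  have AB: "characteristic_sublattice ?L TYPE('f alg_closure)" if cs: "characteristic_subspace E"
  proof -
    obtain C where C: "finite C" "\<forall>\<theta>\<in>C. is_character \<theta>" "fspan C = E"
      using cs unfolding characteristic_subspace_def by blast
    have "?L = {v. \<forall>\<theta>\<in>C. \<theta> v = 1}"
    proof (intro equalityI subsetI)
      fix v assume v: "v \<in> ?L"
      show "v \<in> {v. \<forall>\<theta>\<in>C. \<theta> v = 1}"
      proof (intro CollectI ballI)
        fix \<theta> assume t: "\<theta> \<in> C"
        have "\<theta> \<in> E" using t C(3) fm.span_base by blast
        hence tv: "transl v \<theta> = \<theta>" using v unfolding period_lattice_def by blast
        have "\<theta> (0 + v) = \<theta> 0" using fun_cong[OF tv, of 0] by (simp add: transl_def)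
        moreover have "\<theta> 0 = 1" using char_zero C(2) t by blast
        ultimately show "\<theta> v = 1" by simp
      qed
    next
      fix v assume v: "v \<in> {v. \<forall>\<theta>\<in>C. \<theta> v = 1}"
      define T where "T = {f :: int ^ 'n \<Rightarrow> 'f alg_closure. transl v f = f}"
      have sT: "fsubspace T" unfolding fm.subspace_def T_def
        by (auto simp: transl_def fscale_def fun_eq_iff)
      have "C \<subseteq> T"
      proof
        fix \<theta> assume t: "\<theta> \<in> C"
        have c: "is_character \<theta>" using C(2) t by blast
        have "\<theta> v = 1" using v t by blast
        thus "\<theta> \<in> T" unfolding T_def transl_def by (simp add: char_add[OF c])
      qed
      hence "fspan C \<subseteq> T" using fm.span_minimal[OF _ sT] by blast
      thus "v \<in> ?L" unfolding period_lattice_def T_def using C(3) by auto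
    qed
    thus ?thesis unfolding characteristic_sublattice_def using C(1,2) by blast
  qed
  have BC: "lattice_index ?L > 0 \<and> coprime (lattice_index ?L) p"
    if cl: "characteristic_sublattice ?L TYPE('f alg_closure)"
  proof -
    obtain \<Theta> :: "(int ^ 'n \<Rightarrow> 'f alg_closure) set" where
      T: "finite \<Theta>" "\<forall>\<theta>\<in>\<Theta>. is_character \<theta>" "?L = {v. \<forall>\<theta>\<in>\<Theta>. \<theta> v = 1}"
      using cl unfolding characteristic_sublattice_def by blast
    show ?thesis unfolding T(3) by (rule char_lattice_index[OF assms(1-3) T(1,2)])
  qed
  have CA: "characteristic_subspace E"
    if h: "lattice_index ?L > 0 \<and> coprime (lattice_index ?L) p"
  proof -
    define N where "N = lattice_index ?L"
    have N: "N > 0" using h N_def by simp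
    have cop: "coprime N p" using h N_def by simp
    have N0: "of_nat N \<noteq> (0 :: 'f alg_closure)"
    proof
      assume "of_nat N = (0 :: 'f alg_closure)"
      hence "p dvd N" using of_nat_eq_0_iff_char_dvd[of N, where 'a="'f alg_closure"] CHK by simp
      hence "is_unit p" by (rule coprime_common_divisor[OF cop _ dvd_refl])
      thus False using assms(1) by simp
    qed
    have cardR: "card {z :: 'f alg_closure. z ^ N = 1} = N" by (rule card_roots_unity_alg[OF N N0])
    have subL: "subgroup ?L AG" by (rule period_lattice_subgroup)
    have per: "f (x + smul (int N) v) = f x" if "f \<in> E" for f x v
    proof -
      have "nmul N v \<in> ?L" unfolding N_def by (rule index_mult[OF subL h[THEN conjunct1]])
      hence "smul (int N) v \<in> ?L" by (simp add: smul_nmul)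
      hence tf: "transl (smul (int N) v) f = f" using that unfolding period_lattice_def by blast
      show ?thesis using fun_cong[OF tf, of x] by (simp add: transl_def)
    qed
    define Ch where "Ch = chi N ` (PiE UNIV (\<lambda>_::'n. {z :: 'f alg_closure. z ^ N = 1}))"
    have finCh: "finite Ch" unfolding Ch_def
      using finite_roots_unity_gen[OF N] by (intro finite_imageI finite_PiE) auto
    have chCh: "\<forall>c\<in>Ch. is_character c" unfolding Ch_def
      using chi_char[OF N] by (auto simp: PiE_iff)
    have inspan: "f \<in> fspan Ch" if "f \<in> E" for f
      unfolding Ch_def by (rule periodic_in_span[OF N cardR N0 per[OF that]])
    define C where "C = Ch \<inter> E"
    have "fspan C = E"
    proof (rule fm.span_subspace)
      show "C \<subseteq> E" unfolding C_def by blast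
      show "fsubspace E" by (rule sub)
      show "E \<subseteq> fspan C"
      proof
        fix f assume f: "f \<in> E"
        obtain u where u: "f = (\<Sum>c\<in>Ch. fscale (u c) c)"
          using inspan[OF f] fm.span_finite[OF finCh] by blast
        have "(\<lambda>x. \<Sum>c\<in>Ch. u c * c x) = f" unfolding u by (simp add: fun_eq_iff sum_fun_app fscale_def)
        hence fu: "(\<lambda>x. \<Sum>c\<in>Ch. u c * c x) \<in> E" using f by simp
        have "fscale (u c) c \<in> fspan C" if c: "c \<in> Ch" for c
        proof (cases "u c = 0")
          case True
          hence "fscale (u c) c = 0" by (simp add: fscale_def fun_eq_iff)
          thus ?thesis using fm.span_zero by simp
        next
          case False
          have "c \<in> E" by (rule artin[OF sub assms(5) finCh chCh fu c False])
          hence "c \<in> C" using c unfolding C_def by blast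
          thus ?thesis by (intro fm.span_scale fm.span_base)
        qed
        thus "f \<in> fspan C" unfolding u by (intro fm.span_sum)
      qed
    qed
    moreover have "finite C" unfolding C_def using finCh by simp
    moreover have "\<forall>c\<in>C. is_character c" unfolding C_def using chCh by blast
    ultimately show ?thesis unfolding characteristic_subspace_def by blast
  qed
  show ?thesis using AB BC CA by blast
qed

end
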